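(* Let $\sigma$ be a $2\times 2$ Hermitian matrix of the form $\sigma=n_x\sigma_x+n_y\sigma_y+n_z\sigma_z$ with $(n_x,n_y,n_z)\in\mathbb{R}^3$ a unit vector (so $\sigma^2=I$ and $\mathrm{Tr}\,\sigma=0$), acting on a qubit system $C$. Consider the tripartite graph state $|h_3\rangle=CZ_{(a,b)}CZ_{(a,c)}|+\rangle^{\otimes 3}$ on qubits $a$ (controller Alice), $b$ (Bob), $c$ (Charlie), after Charlie applies $U_{c,C}=|0\rangle\langle0|_c\otimes I_C+|1\rangle\langle1|_c\otimes\sigma$, giving the hybrid object $$S=\tfrac12|+\rangle_a\big(|00\rangle_{bc}\otimes I_C+|11\rangle_{bc}\otimes\sigma\big)+\tfrac12|-\rangle_a\big(|10\rangle_{bc}\otimes I_C+|01\rangle_{bc}\otimes\sigma\big).$$ Without Alice's participation, Bob and Charlie choose orthonormal bases $\{|\beta_1\rangle,|\beta_2\rangle\}$ and $\{|\gamma_1\rangle,|\gamma_2\rangle\}$ of $\mathbb{C}^2$ and measure qubits $b$ and $c$ in them. For outcome $(j,k)$, set $c_{st}=\langle\beta_j|s\rangle\langle\gamma_k|t\rangle$ ($s,t\in\{0,1\}$); the residual object is $$T_{jk}=\tfrac12|+\rangle_a\otimes(c_{00}I_C+c_{11}\sigma)+\tfrac12|-\rangle_a\otimes(c_{10}I_C+c_{01}\sigma),$$ and each outcome $(j,k)$ occurs with probability $p(j,k)=\frac14\sum_{s,t}|c_{st}|^2=\frac14$. Say outcome $(j,k)$ realizes $e^{i\alpha\sigma}$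 if $T_{jk}=|\chi\rangle_a\otimes\lambda\, e^{i\alpha\sigma}$ for some nonzero vector $|\chi\rangle\in\mathbb{C}^2$ and nonzero scalar $\lambda\in\mathbb{C}$; the success rate for $\alpha$ (for a given choice of bases) is the total probability of outcomes that realize $e^{i\alpha\sigma}$. Then, for $\alpha\in[0,2\pi)$, the remote operation $e^{i\alpha\sigma}$ can be realized probabilistically in this way, with success rate (maximized over the choice of bases) equal to $50\%$ for $\alpha\in\{0,\frac{\pi}{4},\frac{\pi}{2},\frac{3\pi}{4},\pi,\frac{5\pi}{4},\frac{3\pi}{2},\frac{7\pi}{4}\}$, and equal to $25\%$ for $\alpha\in\bigcup_{m=0}^{7}\big(\frac{m\pi}{4},\frac{(m+1)\pi}{4}\big)$.
   Context: $|\pm\rangle=(|0\rangle\pm|1\rangle)/\sqrt2$; $\sigma_x,\sigma_y,\sigma_z$ are the Pauli matrices; $CZ_{(a,b)}$ is the controlled-$Z$ gate $\mathrm{diag}(1,1,1,-1)$ on qubits $a,b$. Note $e^{i\alpha\sigma}=\cos\alpha\, I+i\sin\alpha\,\sigma$, so $e^{i\alpha\sigma}$ and $e^{i(\alpha+\pi)\sigma}$ are proportional. In the paper's protocol, with Alice's cooperation (an $X$-basis measurement of qubit $a$ plus classical communication) the operation $e^{i\alpha\sigma}$ on an unknown state of $C$ can be implemented deterministically; this proposition quantifies what Bob and Charlie alone can achieve by local rank-one projective measurements on $b$ and $c$ that disentangle qubit $a$. *)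

theory Defs
  imports "HOL-Analysis.Analysis"
begin

text \<open>Qubit vectors are complex^2 (indices 0,1 of the numeral type 2 = computational basis);
  2x2 operators on system C are complex^2^2 (row index first).\<close>

type_synonym qvec = "complex^2"
type_synonym qmat = "complex^2^2"

definition smat :: "complex \<Rightarrow> qmat \<Rightarrow> qmat" where
  "smat c M = (\<chi> i j. c * M $ i $ j)"

definition Id2 :: qmat where
  "Id2 = (\<chi> i j. if i = j then 1 else 0)"

definition pauli_x :: qmat where
  "pauli_x = (\<chi> i j. if i \<noteq> j then 1 else 0)"

definition pauli_y :: qmat where
  "pauli_y = (\<chi> i j. if i = 0 \<and> j = 1 then - \<i> else if i = 1 \<and> j = 0 then \<i> else 0)"

definition pauli_z :: qmat where
  "pauli_z = (\<chi> i j. if i = j then (if i = 0 then 1 else -1) else 0)"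

definition nsigma :: "real \<Rightarrow> real \<Rightarrow> real \<Rightarrow> qmat" where
  "nsigma nx ny nz = smat (complex_of_real nx) pauli_x + smat (complex_of_real ny) pauli_y
                      + smat (complex_of_real nz) pauli_z"

text \<open>e^{i alpha sigma} = cos alpha I + i sin alpha sigma  (valid since sigma^2 = I)\<close>
definition expsig :: "real \<Rightarrow> qmat \<Rightarrow> qmat" where
  "expsig \<alpha> \<sigma> = smat (complex_of_real (cos \<alpha>)) Id2 + smat (\<i> * complex_of_real (sin \<alpha>)) \<sigma>"

definition ket_plus :: qvec where
  "ket_plus = (\<chi> a. complex_of_real (1 / sqrt 2))"

definition ket_minus :: qvec where
  "ket_minus = (\<chi> a. if a = 0 then complex_of_real (1 / sqrt 2) else - complex_of_real (1 / sqrt 2))"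

text \<open>|chi>_a \<otimes> M, as a function of the computational index of qubit a\<close>
definition tens :: "qvec \<Rightarrow> qmat \<Rightarrow> qmat^2" where
  "tens v M = (\<chi> a. smat (v $ a) M)"

definition hybridS :: "qmat \<Rightarrow> 2 \<Rightarrow> 2 \<Rightarrow> 2 \<Rightarrow> qmat" where
  "hybridS \<sigma> a b c =
     smat (ket_plus $ a / 2)
       (if b = 0 \<and> c = 0 then Id2 else if b = 1 \<and> c = 1 then \<sigma> else 0)
   + smat (ket_minus $ a / 2)
       (if b = 1 \<and> c = 0 then Id2 else if b = 0 \<and> c = 1 then \<sigma> else 0)"

definition onb :: "(2 \<Rightarrow> qvec) \<Rightarrow> bool" where
  "onb \<beta> \<longleftrightarrow> (\<forall>j k. (\<Sum>s\<in>UNIV. cnj (\<beta> j $ s) * \<beta> k $ s) = (if j = k then 1 else 0))"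

definition coef :: "(2 \<Rightarrow> qvec) \<Rightarrow> (2 \<Rightarrow> qvec) \<Rightarrow> 2 \<Rightarrow> 2 \<Rightarrow> 2 \<Rightarrow> 2 \<Rightarrow> complex" where
  "coef \<beta> \<gamma> j k s t = cnj (\<beta> j $ s) * cnj (\<gamma> k $ t)"

text \<open>Residual object T_jk = <beta_j|_b <gamma_k|_c S\<close>
definition residual :: "qmat \<Rightarrow> (2 \<Rightarrow> qvec) \<Rightarrow> (2 \<Rightarrow> qvec) \<Rightarrow> 2 \<Rightarrow> 2 \<Rightarrow> qmat^2" where
  "residual \<sigma> \<beta> \<gamma> j k = (\<chi> a. \<Sum>s\<in>UNIV. \<Sum>t\<in>UNIV. smat (coef \<beta> \<gamma> j k s t) (hybridS \<sigma> a s t))"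

definition outcome_prob :: "(2 \<Rightarrow> qvec) \<Rightarrow> (2 \<Rightarrow> qvec) \<Rightarrow> 2 \<Rightarrow> 2 \<Rightarrow> real" where
  "outcome_prob \<beta> \<gamma> j k = (1/4) * (\<Sum>s\<in>UNIV. \<Sum>t\<in>UNIV. (cmod (coef \<beta> \<gamma> j k s t))^2)"

definition realizes :: "qmat \<Rightarrow> real \<Rightarrow> qmat^2 \<Rightarrow> bool" where
  "realizes \<sigma> \<alpha> T \<longleftrightarrow> (\<exists>v c. v \<noteq> 0 \<and> c \<noteq> 0 \<and> T = tens v (smat c (expsig \<alpha> \<sigma>)))"

definition success_rate :: "qmat \<Rightarrow> real \<Rightarrow> (2 \<Rightarrow> qvec) \<Rightarrow> (2 \<Rightarrow> qvec) \<Rightarrow> real" where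
  "success_rate \<sigma> \<alpha> \<beta> \<gamma> =
     (\<Sum>jk\<in>{jk :: 2 \<times> 2. realizes \<sigma> \<alpha> (residual \<sigma> \<beta> \<gamma> (fst jk) (snd jk))}.
        outcome_prob \<beta> \<gamma> (fst jk) (snd jk))"

definition max_success_rate :: "qmat \<Rightarrow> real \<Rightarrow> real \<Rightarrow> bool" where
  "max_success_rate \<sigma> \<alpha> r \<longleftrightarrow>
     (\<exists>\<beta> \<gamma>. onb \<beta> \<and> onb \<gamma> \<and> success_rate \<sigma> \<alpha> \<beta> \<gamma> = r) \<and>
     (\<forall>\<beta> \<gamma>. onb \<beta> \<and> onb \<gamma> \<longrightarrow> success_rate \<sigma> \<alpha> \<beta> \<gamma> \<le> r)"

end

theory Submission
  imports Defs
begin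

lemma two_eq0: "(2::2) = 0" by simp
lemma two_cases: "(x::2) = 0 \<or> x = 1"
  using exhaust_2[of x] two_eq0 by auto
lemma UNIV2: "(UNIV::2 set) = {0,1}" using two_cases by auto
lemma sum2: "sum f (UNIV::2 set) = f 0 + f 1" unfolding UNIV2 by simp
lemma all2: "(\<forall>x::2. P x) \<longleftrightarrow> P 0 \<and> P 1"
proof -
  { fix x :: 2 assume "P 0" "P 1" then have "P x" using two_cases[of x] by auto }
  thus ?thesis by auto
qed
lemma ne01: "(0::2) \<noteq> 1" by simp

lemma smat_comp[simp]: "smat c M $ i $ j = c * M $ i $ j" by (simp add: smat_def)
lemma Id2_comp: "Id2 $ i $ j = (if i = j then 1 else 0)" by (simp add: Id2_def)

lemma hyb_comp:
 "hybridS \<sigma> a s t $ r $ q = ket_plus $ a / 2 * (if s = 0 \<and> t = 0 then Id2 $ r $ q else if s = 1 \<and> t = 1 then \<sigma> $ r $ q else 0)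
    + ket_minus $ a / 2 * (if s = 1 \<and> t = 0 then Id2 $ r $ q else if s = 0 \<and> t = 1 then \<sigma> $ r $ q else 0)"
  unfolding hybridS_def by (simp del: smat_comp add: smat_def)

lemma res0: "residual \<sigma> \<beta> \<gamma> j k $ a $ r $ q =
  (\<Sum>s\<in>UNIV. \<Sum>t\<in>UNIV. coef \<beta> \<gamma> j k s t * hybridS \<sigma> a s t $ r $ q)"
  by (simp add: residual_def sum_component)

lemma kp: "ket_plus $ a = complex_of_real (1 / sqrt 2)" by (simp add: ket_plus_def)
lemma km: "ket_minus $ a = (if a = 0 then 1 else -1) * complex_of_real (1 / sqrt 2)" by (simp add: ket_minus_def)

lemma residual_comp:
 "residual \<sigma> \<beta> \<gamma> j k $ a $ r $ q =
   (if a = 0 then cnj(\<beta> j$0) + cnj(\<beta> j$1) else cnj(\<beta> j$0) - cnj(\<beta> j$1)) * (complex_of_real (1 / sqrt 2) / 2)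
   * (cnj(\<gamma> k$0) * Id2$r$q + (if a = 0 then 1 else -1) * cnj(\<gamma> k$1) * \<sigma>$r$q)"
proof -
  define c where "c = complex_of_real (1 / sqrt 2)"
  have e: "residual \<sigma> \<beta> \<gamma> j k $ a $ r $ q =
     cnj(\<beta> j$0) * cnj(\<gamma> k$0) * (c/2 * Id2$r$q)
   + cnj(\<beta> j$0) * cnj(\<gamma> k$1) * (ket_minus $ a / 2 * \<sigma>$r$q)
   + cnj(\<beta> j$1) * cnj(\<gamma> k$0) * (ket_minus $ a / 2 * Id2$r$q)
   + cnj(\<beta> j$1) * cnj(\<gamma> k$1) * (c/2 * \<sigma>$r$q)"
    unfolding res0 sum2 hyb_comp coef_def kp c_def by simp
  show ?thesis
    unfolding e km c_def[symmetric]
    by (cases "a = 0") (simp_all add: field_simps)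
qed


lemma nsig_comp:
  "nsigma nx ny nz $ 0 $ 0 = complex_of_real nz"
  "nsigma nx ny nz $ 1 $ 1 = - complex_of_real nz"
  "nsigma nx ny nz $ 0 $ 1 = complex_of_real nx - \<i> * complex_of_real ny"
  "nsigma nx ny nz $ 1 $ 0 = complex_of_real nx + \<i> * complex_of_real ny"
  by (simp_all add: nsigma_def pauli_x_def pauli_y_def pauli_z_def)

lemma tens_comp: "tens v M $ a $ r $ q = v $ a * M $ r $ q" by (simp add: tens_def)
lemma expsig_comp: "expsig \<alpha> \<sigma> $ r $ q = complex_of_real (cos \<alpha>) * Id2 $ r $ q + \<i> * complex_of_real (sin \<alpha>) * \<sigma> $ r $ q"
  by (simp add: expsig_def)

lemma indep:
  assumes u: "nx\<^sup>2 + ny\<^sup>2 + nz\<^sup>2 = 1"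
    and h: "\<forall>r q. X * Id2$r$q + Y * nsigma nx ny nz $r$q = 0"
  shows "X = 0 \<and> Y = 0"
proof -
  have h00: "X + Y * complex_of_real nz = 0" using h[rule_format, of 0 0] by (simp add: Id2_comp nsig_comp)
  have h11: "X - Y * complex_of_real nz = 0" using h[rule_format, of 1 1] by (simp add: Id2_comp nsig_comp)
  have h01: "Y * (complex_of_real nx - \<i> * complex_of_real ny) = 0" using h[rule_format, of 0 1] by (simp add: Id2_comp nsig_comp)
  have h10: "Y * (complex_of_real nx + \<i> * complex_of_real ny) = 0" using h[rule_format, of 1 0] by (simp add: Id2_comp nsig_comp)
  have X0: "X = 0" using h00 h11 by (metis add_diff_cancel_left' diff_add_cancel mult_2 mult_eq_0_iff zero_neq_numeral add_0) 
  show ?thesis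
  proof (rule ccontr)
    assume "\<not> (X = 0 \<and> Y = 0)"
    with X0 have Y: "Y \<noteq> 0" by simp
    have "complex_of_real nz = 0" using h00 X0 Y by simp
    moreover have "complex_of_real nx - \<i> * complex_of_real ny = 0" using h01 Y by simp
    moreover have "complex_of_real nx + \<i> * complex_of_real ny = 0" using h10 Y by simp
    ultimately have "nz = 0" "nx = 0" "ny = 0"
      by (simp_all add: complex_eq_iff)
    with u show False by simp
  qed
qed

lemma core:
  assumes u: "nx\<^sup>2 + ny\<^sup>2 + nz\<^sup>2 = 1"
    and h: "\<forall>r q. A * (g0 * Id2$r$q + s * g1 * nsigma nx ny nz $r$q) = w * (C * Id2$r$q + \<i> * S * nsigma nx ny nz $r$q)"
    and s: "s * s = 1"
  shows "A * (\<i> * S * g0 - s * C * g1) = 0"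
proof -
  have "\<forall>r q. (A * g0 - w * C) * Id2$r$q + (A * s * g1 - w * \<i> * S) * nsigma nx ny nz $r$q = 0"
  proof (intro allI)
    fix r q
    have "A * (g0 * Id2$r$q + s * g1 * nsigma nx ny nz $r$q) = w * (C * Id2$r$q + \<i> * S * nsigma nx ny nz $r$q)"
      using h by blast
    then show "(A * g0 - w * C) * Id2$r$q + (A * s * g1 - w * \<i> * S) * nsigma nx ny nz $r$q = 0"
      by (simp add: algebra_simps)
  qed
  from indep[OF u this] have e1: "A * g0 = w * C" and e2: "A * s * g1 = w * \<i> * S" by simp_all
  have "A * g1 = s * w * \<i> * S"
  proof -
    have "A * g1 = s * (A * s * g1)" using s by (simp add: algebra_simps)
    also have "\<dots> = s * w * \<i> * S" using e2 by simp
    finally show ?thesis .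
  qed
  then have "A * (\<i> * S * g0 - s * C * g1) = \<i> * S * (A * g0) - s * C * (s * w * \<i> * S)"
    by (simp add: algebra_simps)
  also have "\<dots> = 0" using e1 s by (simp add: algebra_simps)
  finally show ?thesis .
qed

lemma realizes_cond:
  assumes u: "nx\<^sup>2 + ny\<^sup>2 + nz\<^sup>2 = 1"
    and R: "realizes (nsigma nx ny nz) \<alpha> (residual (nsigma nx ny nz) \<beta> \<gamma> j k)"
  shows "(cnj(\<beta> j$0) + cnj(\<beta> j$1)) * (\<i> * complex_of_real (sin \<alpha>) * cnj(\<gamma> k$0) - complex_of_real (cos \<alpha>) * cnj(\<gamma> k$1)) = 0
       \<and> (cnj(\<beta> j$0) - cnj(\<beta> j$1)) * (\<i> * complex_of_real (sin \<alpha>) * cnj(\<gamma> k$0) + complex_of_real (cos \<alpha>) * cnj(\<gamma> k$1)) = 0"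
proof -
  let ?s = "nsigma nx ny nz"
  obtain v c where vc: "residual ?s \<beta> \<gamma> j k = tens v (smat c (expsig \<alpha> ?s))"
    using R unfolding realizes_def by blast
  define h where "h = complex_of_real (1 / sqrt 2) / 2"
  have h0: "h \<noteq> 0" unfolding h_def by simp
  have E: "\<And>a r q. residual ?s \<beta> \<gamma> j k $ a $ r $ q = v $ a * c * (complex_of_real (cos \<alpha>) * Id2$r$q + \<i> * complex_of_real (sin \<alpha>) * ?s $r$q)"
    unfolding vc tens_comp smat_comp expsig_comp by (simp add: algebra_simps)
  have a0: "\<forall>r q. ((cnj(\<beta> j$0) + cnj(\<beta> j$1)) * h) * (cnj(\<gamma> k$0) * Id2$r$q + 1 * cnj(\<gamma> k$1) * ?s $r$q)
      = (v $ 0 * c) * (complex_of_real (cos \<alpha>) * Id2$r$q + \<i> * complex_of_real (sin \<alpha>) * ?s $r$q)"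
  proof (intro allI)
    fix r q show "((cnj(\<beta> j$0) + cnj(\<beta> j$1)) * h) * (cnj(\<gamma> k$0) * Id2$r$q + 1 * cnj(\<gamma> k$1) * ?s $r$q)
      = (v $ 0 * c) * (complex_of_real (cos \<alpha>) * Id2$r$q + \<i> * complex_of_real (sin \<alpha>) * ?s $r$q)"
      using E[of 0 r q] unfolding residual_comp h_def[symmetric] by (simp add: algebra_simps)
  qed
  have a1: "\<forall>r q. ((cnj(\<beta> j$0) - cnj(\<beta> j$1)) * h) * (cnj(\<gamma> k$0) * Id2$r$q + (-1) * cnj(\<gamma> k$1) * ?s $r$q)
      = (v $ 1 * c) * (complex_of_real (cos \<alpha>) * Id2$r$q + \<i> * complex_of_real (sin \<alpha>) * ?s $r$q)"
  proof (intro allI)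
    fix r q show "((cnj(\<beta> j$0) - cnj(\<beta> j$1)) * h) * (cnj(\<gamma> k$0) * Id2$r$q + (-1) * cnj(\<gamma> k$1) * ?s $r$q)
      = (v $ 1 * c) * (complex_of_real (cos \<alpha>) * Id2$r$q + \<i> * complex_of_real (sin \<alpha>) * ?s $r$q)"
      using E[of 1 r q] unfolding residual_comp h_def[symmetric] by (simp add: algebra_simps)
  qed
  have r0: "((cnj(\<beta> j$0) + cnj(\<beta> j$1)) * h) * (\<i> * complex_of_real (sin \<alpha>) * cnj(\<gamma> k$0) - 1 * complex_of_real (cos \<alpha>) * cnj(\<gamma> k$1)) = 0"
    by (rule core[OF u a0]) simp
  have r1: "((cnj(\<beta> j$0) - cnj(\<beta> j$1)) * h) * (\<i> * complex_of_real (sin \<alpha>) * cnj(\<gamma> k$0) - (-1) * complex_of_real (cos \<alpha>) * cnj(\<gamma> k$1)) = 0"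
    by (rule core[OF u a1]) simp
  show ?thesis using r0 r1 h0 by simp
qed



lemma L1:
  fixes l0 l1 x0 x1 y0 y1 :: complex
  assumes lx: "l0*x0 + l1*x1 = 0" and ly: "l0*y0 + l1*y1 = 0" and l: "l0 \<noteq> 0 \<or> l1 \<noteq> 0"
    and nx: "x0 * cnj x0 + x1 * cnj x1 = 1" and ny: "y0 * cnj y0 + y1 * cnj y1 = 1"
    and o: "cnj x0 * y0 + cnj x1 * y1 = 0"
  shows False
proof -
  have "l0 * (x0*y1 - x1*y0) = y1*(l0*x0+l1*x1) - x1*(l0*y0+l1*y1)" by (simp add: algebra_simps)
  also have "\<dots> = 0" using lx ly by simp
  finally have d0: "l0 * (x0*y1 - x1*y0) = 0" .
  have "l1 * (x0*y1 - x1*y0) = x0*(l0*y0+l1*y1) - y0*(l0*x0+l1*x1)" by (simp add: algebra_simps)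
  also have "\<dots> = 0" using lx ly by simp
  finally have d1: "l1 * (x0*y1 - x1*y0) = 0" .
  have d: "x0*y1 - x1*y0 = 0" using d0 d1 l by auto
  have "y0 = y0 * (x0 * cnj x0 + x1 * cnj x1)" using nx by simp
  also have "\<dots> = x0*(cnj x0 * y0 + cnj x1 * y1) - cnj x1 * (x0*y1 - x1*y0)" by (simp add: algebra_simps)
  also have "\<dots> = 0" using o d by simp
  finally have y0: "y0 = 0" .
  have "y1 = y1 * (x0 * cnj x0 + x1 * cnj x1)" using nx by simp
  also have "\<dots> = x1*(cnj x0 * y0 + cnj x1 * y1) + cnj x0 * (x0*y1 - x1*y0)" by (simp add: algebra_simps)
  also have "\<dots> = 0" using o d by simp
  finally have y1: "y1 = 0" .
  show False using ny y0 y1 by simp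
qed

lemma L2:
  fixes g0 g1 h0 h1 :: complex and s c :: real
  assumes a: "\<i> * complex_of_real s * g0 + complex_of_real c * g1 = 0"
    and b: "\<i> * complex_of_real s * h0 - complex_of_real c * h1 = 0"
    and o: "g0 * cnj h0 + g1 * cnj h1 = 0"
    and ng: "g0 * cnj g0 + g1 * cnj g1 = 1" and nh: "h0 * cnj h0 + h1 * cnj h1 = 1"
    and c0: "c \<noteq> 0" and sc: "s^2 \<noteq> c^2"
  shows False
proof -
  have b': "complex_of_real c * cnj h1 = - \<i> * complex_of_real s * cnj h0"
  proof -
    have "cnj (\<i> * complex_of_real s * h0 - complex_of_real c * h1) = 0" using b by simp
    then show ?thesis by (simp add: algebra_simps)
  qed
  have a': "complex_of_real c * g1 = - \<i> * complex_of_real s * g0" using a by (simp add: algebra_simps eq_neg_iff_add_eq_0)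
  have "0 = (complex_of_real c)^2 * (g0 * cnj h0 + g1 * cnj h1)" using o by simp
  also have "\<dots> = (complex_of_real c)^2 * g0 * cnj h0 + (complex_of_real c * g1) * (complex_of_real c * cnj h1)"
    by (simp add: algebra_simps power2_eq_square)
  also have "\<dots> = (complex_of_real c)^2 * g0 * cnj h0 + (- \<i> * complex_of_real s * g0) * (- \<i> * complex_of_real s * cnj h0)"
    using a' b' by simp
  also have "\<dots> = complex_of_real (c^2 - s^2) * (g0 * cnj h0)"
    by (simp add: algebra_simps power2_eq_square)
  finally have "complex_of_real (c^2 - s^2) * (g0 * cnj h0) = 0" by simp
  moreover have "c^2 - s^2 \<noteq> 0" using sc by simp
  then have "complex_of_real (c^2 - s^2) \<noteq> 0" by (simp only: of_real_eq_0_iff not_False_eq_True)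
  ultimately have "g0 = 0 \<or> h0 = 0" by simp
  then show False
  proof
    assume "g0 = 0"
    then have "g1 = 0" using a' c0 by simp
    then show False using ng \<open>g0 = 0\<close> by simp
  next
    assume "h0 = 0"
    then have "h1 = 0" using b c0 by simp
    then show False using nh \<open>h0 = 0\<close> by simp
  qed
qed

lemma L3:
  fixes g0 g1 :: complex and s c :: real
  assumes a: "\<i> * complex_of_real s * g0 - complex_of_real c * g1 = 0"
    and b: "\<i> * complex_of_real s * g0 + complex_of_real c * g1 = 0"
    and ng: "g0 * cnj g0 + g1 * cnj g1 = 1"
    and c0: "c \<noteq> 0" and s0: "s \<noteq> 0"
  shows False
proof -
  have "2 * (\<i> * complex_of_real s * g0) = 0" using a b by (simp add: algebra_simps)
  then have g0: "g0 = 0" using s0 by simp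
  have "2 * (complex_of_real c * g1) = 0" using a b by (simp add: algebra_simps)
  then have g1: "g1 = 0" using c0 by simp
  show False using ng g0 g1 by simp
qed

lemma onb_norm: "onb \<gamma> \<Longrightarrow> cnj (\<gamma> k $ 0) * \<gamma> k $ 0 + cnj (\<gamma> k $ 1) * \<gamma> k $ 1 = 1"
  unfolding onb_def by (drule spec[of _ k], drule spec[of _ k]) (simp add: sum2)
lemma onb_orth: "onb \<gamma> \<Longrightarrow> j \<noteq> k \<Longrightarrow> cnj (\<gamma> j $ 0) * \<gamma> k $ 0 + cnj (\<gamma> j $ 1) * \<gamma> k $ 1 = 0"
  unfolding onb_def by (drule spec[of _ j], drule spec[of _ k]) (simp add: sum2)



definition Pb :: "(2 \<Rightarrow> qvec) \<Rightarrow> 2 \<Rightarrow> complex" where "Pb \<beta> j = cnj(\<beta> j$0) + cnj(\<beta> j$1)"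
definition Mb :: "(2 \<Rightarrow> qvec) \<Rightarrow> 2 \<Rightarrow> complex" where "Mb \<beta> j = cnj(\<beta> j$0) - cnj(\<beta> j$1)"
definition Lp :: "real \<Rightarrow> (2 \<Rightarrow> qvec) \<Rightarrow> 2 \<Rightarrow> complex" where
  "Lp \<alpha> \<gamma> k = \<i> * complex_of_real (sin \<alpha>) * cnj(\<gamma> k$0) - complex_of_real (cos \<alpha>) * cnj(\<gamma> k$1)"
definition Lm :: "real \<Rightarrow> (2 \<Rightarrow> qvec) \<Rightarrow> 2 \<Rightarrow> complex" where
  "Lm \<alpha> \<gamma> k = \<i> * complex_of_real (sin \<alpha>) * cnj(\<gamma> k$0) + complex_of_real (cos \<alpha>) * cnj(\<gamma> k$1)"
definition cnd where "cnd \<alpha> \<beta> \<gamma> j k \<longleftrightarrow> Pb \<beta> j * Lp \<alpha> \<gamma> k = 0 \<and> Mb \<beta> j * Lm \<alpha> \<gamma> k = 0"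

lemma real_cnd: "nx\<^sup>2 + ny\<^sup>2 + nz\<^sup>2 = 1 \<Longrightarrow> realizes (nsigma nx ny nz) \<alpha> (residual (nsigma nx ny nz) \<beta> \<gamma> j k) \<Longrightarrow> cnd \<alpha> \<beta> \<gamma> j k"
  unfolding cnd_def Pb_def Mb_def Lp_def Lm_def by (rule realizes_cond)

lemma PM_not_both: "onb \<beta> \<Longrightarrow> Pb \<beta> j = 0 \<Longrightarrow> Mb \<beta> j = 0 \<Longrightarrow> False"
proof -
  assume o: "onb \<beta>" and p: "Pb \<beta> j = 0" and m: "Mb \<beta> j = 0"
  have "2 * cnj(\<beta> j$0) = Pb \<beta> j + Mb \<beta> j" unfolding Pb_def Mb_def by simp
  then have "\<beta> j$0 = 0" using p m by simp
  moreover have "2 * cnj(\<beta> j$1) = Pb \<beta> j - Mb \<beta> j" unfolding Pb_def Mb_def by simp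
  then have "\<beta> j$1 = 0" using p m by simp
  ultimately show False using onb_norm[OF o, of j] by simp
qed

lemma sc_ne: "complex_of_real (sin \<alpha>) \<noteq> 0 \<or> complex_of_real (cos \<alpha>) \<noteq> 0"
proof (rule ccontr)
  assume "\<not> ?thesis"
  then have "sin \<alpha> = 0" "cos \<alpha> = 0" by auto
  then show False using sin_cos_squared_add[of \<alpha>] by simp
qed

lemma func_onb:
  assumes o: "onb \<gamma>" and kk: "k \<noteq> k'" and l: "l0 \<noteq> 0 \<or> l1 \<noteq> 0"
    and a: "l0 * cnj(\<gamma> k$0) + l1 * cnj(\<gamma> k$1) = 0"
    and b: "l0 * cnj(\<gamma> k'$0) + l1 * cnj(\<gamma> k'$1) = 0"
  shows False
proof (rule L1[OF a b l])
  show "cnj (\<gamma> k $ 0) * cnj (cnj (\<gamma> k $ 0)) + cnj (\<gamma> k $ 1) * cnj (cnj (\<gamma> k $ 1)) = 1"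
    using onb_norm[OF o, of k] by simp
  show "cnj (\<gamma> k' $ 0) * cnj (cnj (\<gamma> k' $ 0)) + cnj (\<gamma> k' $ 1) * cnj (cnj (\<gamma> k' $ 1)) = 1"
    using onb_norm[OF o, of k'] by simp
  show "cnj (cnj (\<gamma> k $ 0)) * cnj (\<gamma> k' $ 0) + cnj (cnj (\<gamma> k $ 1)) * cnj (\<gamma> k' $ 1) = 0"
  proof -
    have "cnj (cnj (\<gamma> k $ 0) * \<gamma> k' $ 0 + cnj (\<gamma> k $ 1) * \<gamma> k' $ 1) = 0"
      using onb_orth[OF o, of k k'] kk by simp
    then show ?thesis by (simp add: mult.commute)
  qed
qed

lemma uniq:
  assumes ob: "onb \<beta>" and og: "onb \<gamma>" and c1: "cnd \<alpha> \<beta> \<gamma> j k" and c2: "cnd \<alpha> \<beta> \<gamma> j k'"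
  shows "k = k'"
proof (rule ccontr)
  assume kk: "k \<noteq> k'"
  show False
  proof (cases "Pb \<beta> j = 0")
    case False
    then have "Lp \<alpha> \<gamma> k = 0" "Lp \<alpha> \<gamma> k' = 0" using c1 c2 unfolding cnd_def by auto
    then show False
      using func_onb[OF og kk, of "\<i> * complex_of_real (sin \<alpha>)" "- complex_of_real (cos \<alpha>)"] sc_ne[of \<alpha>]
      unfolding Lp_def by auto
  next
    case True
    then have "Mb \<beta> j \<noteq> 0" using PM_not_both[OF ob] by blast
    then have "Lm \<alpha> \<gamma> k = 0" "Lm \<alpha> \<gamma> k' = 0" using c1 c2 unfolding cnd_def by auto
    then show False
      using func_onb[OF og kk, of "\<i> * complex_of_real (sin \<alpha>)" "complex_of_real (cos \<alpha>)"] sc_ne[of \<alpha>]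
      unfolding Lm_def by auto
  qed
qed

lemma outcome_quarter:
  assumes ob: "onb \<beta>" and og: "onb \<gamma>"
  shows "outcome_prob \<beta> \<gamma> j k = 1/4"
proof -
  have nb: "(cmod (\<beta> j $ 0))^2 + (cmod (\<beta> j $ 1))^2 = 1"
  proof -
    have "complex_of_real ((cmod (\<beta> j $ 0))^2 + (cmod (\<beta> j $ 1))^2) = cnj (\<beta> j $ 0) * \<beta> j $ 0 + cnj (\<beta> j $ 1) * \<beta> j $ 1"
      by (simp only: of_real_add complex_norm_square) (simp add: mult.commute)
    then show ?thesis using onb_norm[OF ob, of j] by (metis of_real_eq_1_iff)
  qed
  have ng: "(cmod (\<gamma> k $ 0))^2 + (cmod (\<gamma> k $ 1))^2 = 1"
  proof -
    have "complex_of_real ((cmod (\<gamma> k $ 0))^2 + (cmod (\<gamma> k $ 1))^2) = cnj (\<gamma> k $ 0) * \<gamma> k $ 0 + cnj (\<gamma> k $ 1) * \<gamma> k $ 1"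
      by (simp only: of_real_add complex_norm_square) (simp add: mult.commute)
    then show ?thesis using onb_norm[OF og, of k] by (metis of_real_eq_1_iff)
  qed
  have "(\<Sum>s\<in>UNIV. \<Sum>t\<in>UNIV. (cmod (coef \<beta> \<gamma> j k s t))^2)
      = ((cmod (\<beta> j $ 0))^2 + (cmod (\<beta> j $ 1))^2) * ((cmod (\<gamma> k $ 0))^2 + (cmod (\<gamma> k $ 1))^2)"
    unfolding sum2 coef_def by (simp add: norm_mult power_mult_distrib algebra_simps)
  then show ?thesis unfolding outcome_prob_def using nb ng by simp
qed

lemma rate_card:
  assumes ob: "onb \<beta>" and og: "onb \<gamma>"
  shows "success_rate \<sigma> \<alpha> \<beta> \<gamma> = real (card {jk :: 2 \<times> 2. realizes \<sigma> \<alpha> (residual \<sigma> \<beta> \<gamma> (fst jk) (snd jk))}) / 4"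
  unfolding success_rate_def outcome_quarter[OF ob og] by simp

lemma card_le2:
  assumes u: "nx\<^sup>2 + ny\<^sup>2 + nz\<^sup>2 = 1" and ob: "onb \<beta>" and og: "onb \<gamma>"
  shows "card {jk :: 2 \<times> 2. realizes (nsigma nx ny nz) \<alpha> (residual (nsigma nx ny nz) \<beta> \<gamma> (fst jk) (snd jk))} \<le> 2"
proof -
  define f where "f j = (SOME k. cnd \<alpha> \<beta> \<gamma> j k)" for j
  have sub: "{jk :: 2 \<times> 2. realizes (nsigma nx ny nz) \<alpha> (residual (nsigma nx ny nz) \<beta> \<gamma> (fst jk) (snd jk))} \<subseteq> (\<lambda>j. (j, f j)) ` UNIV"
  proof
    fix jk :: "2 \<times> 2" assume "jk \<in> {jk. realizes (nsigma nx ny nz) \<alpha> (residual (nsigma nx ny nz) \<beta> \<gamma> (fst jk) (snd jk))}"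
    then have c: "cnd \<alpha> \<beta> \<gamma> (fst jk) (snd jk)" using real_cnd[OF u] by blast
    then have "cnd \<alpha> \<beta> \<gamma> (fst jk) (f (fst jk))" unfolding f_def by (rule someI)
    then have "snd jk = f (fst jk)" using uniq[OF ob og c] by blast
    then show "jk \<in> (\<lambda>j. (j, f j)) ` UNIV" by (metis prod.collapse rangeI)
  qed
  have "card {jk :: 2 \<times> 2. realizes (nsigma nx ny nz) \<alpha> (residual (nsigma nx ny nz) \<beta> \<gamma> (fst jk) (snd jk))} \<le> card ((\<lambda>j. (j, f j)) ` (UNIV :: 2 set))"
    by (rule card_mono[OF _ sub]) simp
  also have "\<dots> \<le> card (UNIV :: 2 set)" by (rule card_image_le) simp
  also have "\<dots> = 2" by simp
  finally show ?thesis .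
qed



lemma gnorm: "onb \<gamma> \<Longrightarrow> cnj (\<gamma> k $ 0) * cnj (cnj (\<gamma> k $ 0)) + cnj (\<gamma> k $ 1) * cnj (cnj (\<gamma> k $ 1)) = 1"
  using onb_norm[of \<gamma> k] by simp

lemma one_zero:
  assumes og: "onb \<gamma>" and c: "cnd \<alpha> \<beta> \<gamma> j k" and s0: "sin \<alpha> \<noteq> 0" and c0: "cos \<alpha> \<noteq> 0"
  shows "Pb \<beta> j = 0 \<or> Mb \<beta> j = 0"
proof (rule ccontr)
  assume "\<not> ?thesis"
  then have "Lp \<alpha> \<gamma> k = 0" "Lm \<alpha> \<gamma> k = 0" using c unfolding cnd_def by auto
  then show False using L3[OF _ _ gnorm[OF og] c0 s0] unfolding Lp_def Lm_def by blast
qed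

lemma pair:
  assumes ob: "onb \<beta>" and og: "onb \<gamma>" and c1: "cnd \<alpha> \<beta> \<gamma> j k" and c2: "cnd \<alpha> \<beta> \<gamma> j' k'"
    and p: "Pb \<beta> j = 0" and m: "Mb \<beta> j' = 0"
    and s0: "sin \<alpha> \<noteq> 0" and c0: "cos \<alpha> \<noteq> 0" and sc: "(sin \<alpha>)^2 \<noteq> (cos \<alpha>)^2"
  shows False
proof -
  have "Mb \<beta> j \<noteq> 0" using PM_not_both[OF ob] p by blast
  then have lm: "Lm \<alpha> \<gamma> k = 0" using c1 unfolding cnd_def by auto
  have "Pb \<beta> j' \<noteq> 0" using PM_not_both[OF ob] m by blast
  then have lp: "Lp \<alpha> \<gamma> k' = 0" using c2 unfolding cnd_def by auto
  show False
  proof (cases "k = k'")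
    case True
    then show False using L3[OF _ _ gnorm[OF og] c0 s0] lm lp unfolding Lp_def Lm_def by blast
  next
    case False
    have o: "cnj (\<gamma> k $ 0) * cnj (cnj (\<gamma> k' $ 0)) + cnj (\<gamma> k $ 1) * cnj (cnj (\<gamma> k' $ 1)) = 0"
      using onb_orth[OF og False] by simp
    show False using L2[OF _ _ o gnorm[OF og] gnorm[OF og] c0 sc] lm lp unfolding Lp_def Lm_def by blast
  qed
qed

lemma card_le1:
  assumes u: "nx\<^sup>2 + ny\<^sup>2 + nz\<^sup>2 = 1" and ob: "onb \<beta>" and og: "onb \<gamma>"
    and s0: "sin \<alpha> \<noteq> 0" and c0: "cos \<alpha> \<noteq> 0" and sc: "(sin \<alpha>)^2 \<noteq> (cos \<alpha>)^2"
  shows "card {jk :: 2 \<times> 2. realizes (nsigma nx ny nz) \<alpha> (residual (nsigma nx ny nz) \<beta> \<gamma> (fst jk) (snd jk))} \<le> 1"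
proof -
  let ?A = "{jk :: 2 \<times> 2. realizes (nsigma nx ny nz) \<alpha> (residual (nsigma nx ny nz) \<beta> \<gamma> (fst jk) (snd jk))}"
  have "\<forall>x\<in>?A. \<forall>y\<in>?A. x = y"
  proof (intro ballI)
    fix x y assume x: "x \<in> ?A" and y: "y \<in> ?A"
    obtain j k where xj: "x = (j, k)" by (cases x)
    obtain j' k' where yj: "y = (j', k')" by (cases y)
    have c1: "cnd \<alpha> \<beta> \<gamma> j k" using x xj real_cnd[OF u] by auto
    have c2: "cnd \<alpha> \<beta> \<gamma> j' k'" using y yj real_cnd[OF u] by auto
    show "x = y"
    proof (cases "j = j'")
      case True
      then show ?thesis using uniq[OF ob og c1] c2 xj yj by simp
    next
      case jj: False
      have z1: "Pb \<beta> j = 0 \<or> Mb \<beta> j = 0" by (rule one_zero[OF og c1 s0 c0])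
      have z2: "Pb \<beta> j' = 0 \<or> Mb \<beta> j' = 0" by (rule one_zero[OF og c2 s0 c0])
      have False
      proof -
        { assume "Pb \<beta> j = 0" "Pb \<beta> j' = 0"
          then have False using func_onb[OF ob jj, of 1 1] unfolding Pb_def by simp }
        moreover
        { assume "Mb \<beta> j = 0" "Mb \<beta> j' = 0"
          then have False using func_onb[OF ob jj, of 1 "-1"] unfolding Mb_def by simp }
        moreover
        { assume "Pb \<beta> j = 0" "Mb \<beta> j' = 0"
          then have False using pair[OF ob og c1 c2 _ _ s0 c0 sc] by blast }
        moreover
        { assume "Mb \<beta> j = 0" "Pb \<beta> j' = 0"
          then have False using pair[OF ob og c2 c1 _ _ s0 c0 sc] by blast }
        ultimately show False using z1 z2 by blast
      qed
      then show ?thesis ..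
    qed
  qed
  then show ?thesis using card_le_Suc0_iff_eq[of ?A] by simp
qed



definition rr :: complex where "rr = complex_of_real (1 / sqrt 2)"
lemma rr_sq: "rr * rr = 1/2"
proof -
  have "(1/sqrt 2) * (1/sqrt 2) = 1/(sqrt 2 * sqrt 2)" by simp
  also have "\<dots> = (1/2::real)" by simp
  finally have "complex_of_real ((1/sqrt 2) * (1/sqrt 2)) = 1/2" by simp
  then show ?thesis unfolding rr_def of_real_mult .
qed
lemma rr_cnj[simp]: "cnj rr = rr" unfolding rr_def by simp

definition bX :: "2 \<Rightarrow> qvec" where
  "bX j = (\<chi> s. if j = 0 then (if s = 0 then rr else - rr) else rr)"
definition gA :: "real \<Rightarrow> 2 \<Rightarrow> qvec" where
  "gA \<alpha> k = (\<chi> t. if k = 0 then (if t = 0 then complex_of_real (cos \<alpha>) else \<i> * complex_of_real (sin \<alpha>))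
                   else (if t = 0 then \<i> * complex_of_real (sin \<alpha>) else complex_of_real (cos \<alpha>)))"
definition gB :: "real \<Rightarrow> 2 \<Rightarrow> qvec" where
  "gB \<alpha> k = (\<chi> t. if k = 0 then (if t = 0 then complex_of_real (cos \<alpha>) else \<i> * complex_of_real (sin \<alpha>))
                   else (if t = 0 then complex_of_real (cos \<alpha>) else - \<i> * complex_of_real (sin \<alpha>)))"

lemma onb2: "onb \<beta> \<longleftrightarrow>
   cnj (\<beta> 0 $ 0) * \<beta> 0 $ 0 + cnj (\<beta> 0 $ 1) * \<beta> 0 $ 1 = 1 \<and>
   cnj (\<beta> 1 $ 0) * \<beta> 1 $ 0 + cnj (\<beta> 1 $ 1) * \<beta> 1 $ 1 = 1 \<and>
   cnj (\<beta> 0 $ 0) * \<beta> 1 $ 0 + cnj (\<beta> 0 $ 1) * \<beta> 1 $ 1 = 0 \<and>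
   cnj (\<beta> 1 $ 0) * \<beta> 0 $ 0 + cnj (\<beta> 1 $ 1) * \<beta> 0 $ 1 = 0"
  unfolding onb_def all2 sum2 by auto

lemma onb_bX: "onb bX"
  unfolding onb2 bX_def by (simp add: rr_sq)

lemma cs1: "complex_of_real (cos \<alpha>) * complex_of_real (cos \<alpha>) + complex_of_real (sin \<alpha>) * complex_of_real (sin \<alpha>) = 1"
proof -
  have "cos \<alpha> * cos \<alpha> + sin \<alpha> * sin \<alpha> = 1"
    using sin_cos_squared_add[of \<alpha>] by (simp add: power2_eq_square)
  then have "complex_of_real (cos \<alpha> * cos \<alpha> + sin \<alpha> * sin \<alpha>) = 1" by simp
  then show ?thesis by (simp only: of_real_add of_real_mult)
qed

lemma onb_gA: "onb (gA \<alpha>)"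
  unfolding onb2 gA_def using cs1[of \<alpha>] by (simp add: algebra_simps)

lemma onb_gB: assumes "(sin \<alpha>)^2 = (cos \<alpha>)^2" shows "onb (gB \<alpha>)"
proof -
  have e: "complex_of_real (cos \<alpha>) * complex_of_real (cos \<alpha>) = complex_of_real (sin \<alpha>) * complex_of_real (sin \<alpha>)"
    using assms by (metis of_real_mult power2_eq_square)
  show ?thesis unfolding onb2 gB_def using cs1[of \<alpha>] e by (simp add: algebra_simps)
qed

lemma realize_intro:
  assumes h: "\<And>a r q. T $ a $ r $ q = v $ a * c * (complex_of_real (cos \<alpha>) * Id2$r$q + \<i> * complex_of_real (sin \<alpha>) * \<sigma> $r$q)"
    and v: "v \<noteq> 0" and c: "c \<noteq> 0"
  shows "realizes \<sigma> \<alpha> T"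
  unfolding realizes_def
proof (intro exI conjI)
  show "T = tens v (smat c (expsig \<alpha> \<sigma>))"
    unfolding vec_eq_iff tens_comp smat_comp expsig_comp h by (simp add: algebra_simps)
qed (use v c in auto)



lemma rr_sq2: "rr * (rr * x) = x / 2"
  using rr_sq by (metis mult.assoc times_divide_eq_left mult_1)

lemma resX: "residual \<sigma> bX \<gamma> j k $ a $ r $ q =
   (if a = 0 then (if j = 0 then 0 else 2 * rr) else (if j = 0 then 2 * rr else 0)) * (rr / 2)
   * (cnj(\<gamma> k$0) * Id2$r$q + (if a = 0 then 1 else -1) * cnj(\<gamma> k$1) * \<sigma>$r$q)"
  unfolding residual_comp rr_def[symmetric] by (simp add: bX_def)

lemma R00A: "realizes \<sigma> \<alpha> (residual \<sigma> bX (gA \<alpha>) 0 0)"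
proof (rule realize_intro[where v = "\<chi> a. if a = 0 then 0 else 1/2" and c = 1])
  fix a r q
  show "residual \<sigma> bX (gA \<alpha>) 0 0 $ a $ r $ q = (\<chi> a. if a = 0 then 0 else 1/2) $ a * 1 *
      (complex_of_real (cos \<alpha>) * Id2 $ r $ q + \<i> * complex_of_real (sin \<alpha>) * \<sigma> $ r $ q)"
    unfolding resX using two_cases[of a] by (auto simp add: gA_def rr_sq rr_sq2 algebra_simps)
next
  show "(\<chi> a::2. if a = 0 then (0::complex) else 1/2) \<noteq> 0"
    by (simp add: vec_eq_iff) (rule exI[of _ "1::2"], simp)
qed simp

lemma R00B: "realizes \<sigma> \<alpha> (residual \<sigma> bX (gB \<alpha>) 0 0)"
proof -
  have "gB \<alpha> 0 = gA \<alpha> 0" unfolding gA_def gB_def by simp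
  then have "residual \<sigma> bX (gB \<alpha>) 0 0 = residual \<sigma> bX (gA \<alpha>) 0 0"
    unfolding residual_def coef_def by simp
  then show ?thesis using R00A by simp
qed

lemma R11B: "realizes \<sigma> \<alpha> (residual \<sigma> bX (gB \<alpha>) 1 1)"
proof (rule realize_intro[where v = "\<chi> a. if a = 0 then 1/2 else 0" and c = 1])
  fix a r q
  show "residual \<sigma> bX (gB \<alpha>) 1 1 $ a $ r $ q = (\<chi> a. if a = 0 then 1/2 else 0) $ a * 1 *
      (complex_of_real (cos \<alpha>) * Id2 $ r $ q + \<i> * complex_of_real (sin \<alpha>) * \<sigma> $ r $ q)"
    unfolding resX using two_cases[of a] by (auto simp add: gB_def rr_sq rr_sq2 algebra_simps)
next
  show "(\<chi> a::2. if a = 0 then (1/2::complex) else 0) \<noteq> 0"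
    by (simp add: vec_eq_iff all2)
qed simp

lemma R10A:
  assumes sc: "sin \<alpha> * cos \<alpha> = 0"
  shows "realizes \<sigma> \<alpha> (residual \<sigma> bX (gA \<alpha>) 1 0)"
proof -
  let ?C = "complex_of_real (cos \<alpha>)" and ?S = "complex_of_real (sin \<alpha>)"
  define l where "l = ?C * ?C - ?S * ?S"
  have cl: "?C * l = ?C" and sl: "?S * l = - ?S" and l0: "l \<noteq> 0"
  proof -
    from sc have "sin \<alpha> = 0 \<or> cos \<alpha> = 0" by simp
    moreover have "sin \<alpha> = 0 \<Longrightarrow> (cos \<alpha>)^2 = 1" using sin_cos_squared_add[of \<alpha>] by simp
    moreover have "cos \<alpha> = 0 \<Longrightarrow> (sin \<alpha>)^2 = 1" using sin_cos_squared_add[of \<alpha>] by simp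
    ultimately have "(sin \<alpha> = 0 \<and> (cos \<alpha>)^2 = 1) \<or> (cos \<alpha> = 0 \<and> (sin \<alpha>)^2 = 1)"
      by blast
    then have "(sin \<alpha> = 0 \<and> (cos \<alpha> = 1 \<or> cos \<alpha> = -1)) \<or> (cos \<alpha> = 0 \<and> (sin \<alpha> = 1 \<or> sin \<alpha> = -1))"
      by (simp add: power2_eq_1_iff)
    then show "?C * l = ?C" "?S * l = - ?S" "l \<noteq> 0" unfolding l_def by auto
  qed
  show ?thesis
  proof (rule realize_intro[where v = "\<chi> a. if a = 0 then 1/2 else 0" and c = l])
    fix a r q
    show "residual \<sigma> bX (gA \<alpha>) 1 0 $ a $ r $ q = (\<chi> a. if a = 0 then 1/2 else 0) $ a * l *
        (?C * Id2 $ r $ q + \<i> * ?S * \<sigma> $ r $ q)"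
    proof (cases "a = 0")
      case True
      have "residual \<sigma> bX (gA \<alpha>) 1 0 $ a $ r $ q = 1/2 * (?C * Id2 $ r $ q - \<i> * ?S * \<sigma> $ r $ q)"
        unfolding resX using True by (simp add: gA_def rr_sq rr_sq2 algebra_simps)
      also have "\<dots> = 1/2 * ((?C * l) * Id2 $ r $ q + \<i> * (?S * l) * \<sigma> $ r $ q)" using cl sl by simp
      also have "\<dots> = (\<chi> a. if a = 0 then 1/2 else 0) $ a * l * (?C * Id2 $ r $ q + \<i> * ?S * \<sigma> $ r $ q)"
        using True by (simp add: algebra_simps)
      finally show ?thesis .
    next
      case False
      then show ?thesis unfolding resX by simp
    qed
  next
    show "(\<chi> a::2. if a = 0 then (1/2::complex) else 0) \<noteq> 0"
      by (simp add: vec_eq_iff all2)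
  qed (rule l0)
qed



lemma trig_even:
  assumes "\<alpha> = real (2*n) * pi / 4" shows "sin \<alpha> * cos \<alpha> = 0"
proof -
  have "2 * \<alpha> = real n * pi" using assms by (simp add: algebra_simps)
  then have "sin (2 * \<alpha>) = 0" by simp
  then show ?thesis unfolding sin_double by simp
qed

lemma trig_odd:
  assumes "\<alpha> = real (2*n+1) * pi / 4" shows "(sin \<alpha>)^2 = (cos \<alpha>)^2"
proof -
  have "2 * \<alpha> = real_of_int (int n) * pi + pi / 2" using assms by (simp add: algebra_simps)
  then have "cos (2 * \<alpha>) = 0" using cos_zero_iff_int2 by blast
  then show ?thesis unfolding cos_double by simp
qed

lemma trig_generic:
  assumes "real m * pi / 4 < \<alpha>" "\<alpha> < real (m + 1) * pi / 4"
  shows "sin \<alpha> \<noteq> 0 \<and> cos \<alpha> \<noteq> 0 \<and> (sin \<alpha>)^2 \<noteq> (cos \<alpha>)^2"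
proof -
  have "sin (4 * \<alpha>) \<noteq> 0"
  proof
    assume "sin (4 * \<alpha>) = 0"
    then obtain i :: int where i: "4 * \<alpha> = of_int i * pi" using sin_zero_iff_int2 by blast
    have "real m * pi < 4 * \<alpha>" using assms(1) by (simp add: field_simps)
    then have "real m * pi < of_int i * pi" using i by simp
    then have "real m < of_int i" by simp
    then have l: "int m < i" by linarith
    have "4 * \<alpha> < real (m+1) * pi" using assms(2) by (simp add: field_simps)
    then have "of_int i * pi < real (m+1) * pi" using i by simp
    then have "of_int i < real (m+1)" by simp
    then have "i < int m + 1" by linarith
    with l show False by simp
  qed
  moreover have "sin (4 * \<alpha>) = 4 * (sin \<alpha> * cos \<alpha>) * ((cos \<alpha>)^2 - (sin \<alpha>)^2)"
  proof -
    have "sin (4 * \<alpha>) = sin (2 * (2 * \<alpha>))" by simp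
    also have "\<dots> = 2 * sin (2 * \<alpha>) * cos (2 * \<alpha>)" by (rule sin_double)
    also have "\<dots> = 4 * (sin \<alpha> * cos \<alpha>) * ((cos \<alpha>)^2 - (sin \<alpha>)^2)" unfolding sin_double cos_double by simp
    finally show ?thesis .
  qed
  ultimately show ?thesis by auto
qed

lemma card_ge:
  assumes "x \<in> A" "y \<in> A" "x \<noteq> y" "finite A" shows "2 \<le> card A"
proof -
  have "card {x, y} \<le> card A" using assms by (intro card_mono) auto
  then show ?thesis using assms(3) by simp
qed

theorem proposition2:
  fixes nx ny nz \<alpha> :: real
  assumes "nx\<^sup>2 + ny\<^sup>2 + nz\<^sup>2 = 1"
    and "0 \<le> \<alpha>" and "\<alpha> < 2 * pi"
  shows "((\<exists>m::nat. m \<le> 7 \<and> \<alpha> = real m * pi / 4)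
            \<longrightarrow> max_success_rate (nsigma nx ny nz) \<alpha> (1/2))
       \<and> ((\<exists>m::nat. m \<le> 7 \<and> real m * pi / 4 < \<alpha> \<and> \<alpha> < real (m + 1) * pi / 4)
            \<longrightarrow> max_success_rate (nsigma nx ny nz) \<alpha> (1/4))"
proof (intro conjI impI)
  let ?s = "nsigma nx ny nz"
  note u = assms(1)
  let ?A = "\<lambda>\<beta> \<gamma>. {jk :: 2 \<times> 2. realizes ?s \<alpha> (residual ?s \<beta> \<gamma> (fst jk) (snd jk))}"
  have fin: "\<And>\<beta> \<gamma>. finite (?A \<beta> \<gamma>)" by simp
  {
    assume "\<exists>m::nat. m \<le> 7 \<and> \<alpha> = real m * pi / 4"
    then obtain m :: nat where m: "\<alpha> = real m * pi / 4" by blast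
    have ex: "\<exists>\<beta> \<gamma>. onb \<beta> \<and> onb \<gamma> \<and> success_rate ?s \<alpha> \<beta> \<gamma> = 1/2"
    proof (cases "even m")
      case True
      then obtain n where "m = 2 * n" by blast
      then have sc: "sin \<alpha> * cos \<alpha> = 0" using trig_even m by blast
      have "2 \<le> card (?A bX (gA \<alpha>))"
        by (rule card_ge[of "(0,0)" _ "(1,0)"]) (use R00A R10A[OF sc] in auto)
      moreover have "card (?A bX (gA \<alpha>)) \<le> 2" by (rule card_le2[OF u onb_bX onb_gA])
      ultimately have "card (?A bX (gA \<alpha>)) = 2" by simp
      then have "success_rate ?s \<alpha> bX (gA \<alpha>) = 1/2" using rate_card[OF onb_bX onb_gA[of \<alpha>], of ?s \<alpha>] by simp
      then show ?thesis using onb_bX onb_gA by blast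
    next
      case False
      then obtain n where "m = 2 * n + 1" using oddE by blast
      then have sc: "(sin \<alpha>)^2 = (cos \<alpha>)^2" using trig_odd m by blast
      have "2 \<le> card (?A bX (gB \<alpha>))"
        by (rule card_ge[of "(0,0)" _ "(1,1)"]) (use R00B R11B in auto)
      moreover have "card (?A bX (gB \<alpha>)) \<le> 2" by (rule card_le2[OF u onb_bX onb_gB[OF sc]])
      ultimately have "card (?A bX (gB \<alpha>)) = 2" by simp
      then have "success_rate ?s \<alpha> bX (gB \<alpha>) = 1/2" using rate_card[OF onb_bX onb_gB[OF sc], of ?s \<alpha>] by simp
      then show ?thesis using onb_bX onb_gB[OF sc] by blast
    qed
    have all: "\<forall>\<beta> \<gamma>. onb \<beta> \<and> onb \<gamma> \<longrightarrow> success_rate ?s \<alpha> \<beta> \<gamma> \<le> 1/2"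
    proof (intro allI impI)
      fix \<beta> \<gamma> assume o: "onb \<beta> \<and> onb \<gamma>"
      have "card (?A \<beta> \<gamma>) \<le> 2" using card_le2[OF u] o by blast
      moreover have "success_rate ?s \<alpha> \<beta> \<gamma> = real (card (?A \<beta> \<gamma>)) / 4" using o by (intro rate_card) auto
      ultimately show "success_rate ?s \<alpha> \<beta> \<gamma> \<le> 1/2" by linarith
    qed
    show "max_success_rate ?s \<alpha> (1/2)" unfolding max_success_rate_def using ex all by blast
  }
  {
    assume "\<exists>m::nat. m \<le> 7 \<and> real m * pi / 4 < \<alpha> \<and> \<alpha> < real (m + 1) * pi / 4"
    then obtain m :: nat where "real m * pi / 4 < \<alpha>" "\<alpha> < real (m + 1) * pi / 4" by blast
    then have g: "sin \<alpha> \<noteq> 0" "cos \<alpha> \<noteq> 0" "(sin \<alpha>)^2 \<noteq> (cos \<alpha>)^2" using trig_generic by blast+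
    have "1 \<le> card (?A bX (gA \<alpha>))"
    proof -
      have "(0,0) \<in> ?A bX (gA \<alpha>)" using R00A by simp
      then have "{(0,0)} \<subseteq> ?A bX (gA \<alpha>)" by (simp only: insert_subset empty_subsetI simp_thms)
      from card_mono[OF fin this] show ?thesis by simp
    qed
    moreover have "card (?A bX (gA \<alpha>)) \<le> 1" by (rule card_le1[OF u onb_bX onb_gA g])
    ultimately have "card (?A bX (gA \<alpha>)) = 1" by simp
    then have "success_rate ?s \<alpha> bX (gA \<alpha>) = 1/4" using rate_card[OF onb_bX onb_gA[of \<alpha>], of ?s \<alpha>] by simp
    then have ex: "\<exists>\<beta> \<gamma>. onb \<beta> \<and> onb \<gamma> \<and> success_rate ?s \<alpha> \<beta> \<gamma> = 1/4"
      using onb_bX onb_gA by blast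
    have all: "\<forall>\<beta> \<gamma>. onb \<beta> \<and> onb \<gamma> \<longrightarrow> success_rate ?s \<alpha> \<beta> \<gamma> \<le> 1/4"
    proof (intro allI impI)
      fix \<beta> \<gamma> assume o: "onb \<beta> \<and> onb \<gamma>"
      have "card (?A \<beta> \<gamma>) \<le> 1" using card_le1[OF u _ _ g] o by blast
      moreover have "success_rate ?s \<alpha> \<beta> \<gamma> = real (card (?A \<beta> \<gamma>)) / 4" using o by (intro rate_card) auto
      ultimately show "success_rate ?s \<alpha> \<beta> \<gamma> \<le> 1/4" by linarith
    qed
    show "max_success_rate ?s \<alpha> (1/4)" unfolding max_success_rate_def using ex all by blast
  }
qed

end
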